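(* Let $(Z_{m,n})_{m,n\in\mathbb N}$ be a family of real-valued random variables on a probability space with $|Z_{m,n}|\le1$ and $\mathbb E(Z_{m,n})=0$ for all $m,n$, such that for each fixed $m$ the random variables $(Z_{m,n})_{n\ge1}$ are independent. Let $(\rho_n)$ be positive numbers with $\sup_{m\in\mathbb N}\mathrm{Var}(Z_{m,n})\le\rho_n$ for every $n$ and $\lim_{N\to\infty}\frac1{\log N}\sum_{n=1}^N\rho_n=+\infty$. Then almost surely there is a constant $C_\omega$ such that for all $N\ge2$, $$\max_{1\le m\le N}\max_{t\in[0,1]}\Bigl|\sum_{n=1}^N Z_{m,n}\,e(nt)\Bigr|\le C_\omega\sqrt{\log N\cdot\sum_{n=1}^N\rho_n}.$$
   Context: $e(t)=e^{2\pi i t}$. *)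

theory Defs
  imports "HOL-Probability.Probability"
begin

definition e :: "real \<Rightarrow> complex" where
  "e t = exp (2 * complex_of_real pi * \<i> * complex_of_real t)"

end

theory Submission
  imports Defs
begin

lemma e_eq: "e x = complex_of_real (cos (2*pi*x)) + \<i> * complex_of_real (sin (2*pi*x))"
proof -
  have "e x = exp (\<i> * complex_of_real (2*pi*x))" unfolding e_def by (simp add: mult_ac)
  also have "\<dots> = cis (2*pi*x)" by (simp add: cis_conv_exp)
  also have "\<dots> = complex_of_real (cos (2*pi*x)) + \<i> * complex_of_real (sin (2*pi*x))"
    by (simp add: complex_eq_iff)
  finally show ?thesis .
qed

lemma e_cis: "e x = cis (2*pi*x)"
  unfolding e_def by (simp add: cis_conv_exp mult_ac)

lemma norm_e: "norm (e x) = 1"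
  by (simp add: e_cis)

lemma cos_lip: "\<bar>cos (a::real) - cos b\<bar> \<le> \<bar>a - b\<bar>"
proof -
  have "\<bar>cos a - cos b\<bar> = 2 * \<bar>sin ((a+b)/2)\<bar> * \<bar>sin ((b-a)/2)\<bar>"
    by (simp add: cos_diff_cos abs_mult)
  also have "\<dots> \<le> 2 * 1 * \<bar>(b-a)/2\<bar>"
    by (intro mult_mono abs_sin_x_le_abs_x) auto
  finally show ?thesis by simp
qed

lemma sin_lip: "\<bar>sin (a::real) - sin b\<bar> \<le> \<bar>a - b\<bar>"
proof -
  have "\<bar>sin a - sin b\<bar> = 2 * \<bar>sin ((a-b)/2)\<bar> * \<bar>cos ((a+b)/2)\<bar>"
    by (simp add: sin_diff_sin abs_mult)
  also have "\<dots> \<le> 2 * \<bar>(a-b)/2\<bar> * 1"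
    by (intro mult_mono abs_sin_x_le_abs_x) auto
  finally show ?thesis by simp
qed

lemma e_lip: "norm (e a - e b) \<le> 4 * pi * \<bar>a - b\<bar>"
proof -
  have "e a - e b = complex_of_real (cos (2*pi*a) - cos (2*pi*b)) + \<i> * complex_of_real (sin (2*pi*a) - sin (2*pi*b))"
    by (simp add: e_eq algebra_simps)
  also have "norm \<dots> \<le> \<bar>cos (2*pi*a) - cos (2*pi*b)\<bar> + \<bar>sin (2*pi*a) - sin (2*pi*b)\<bar>"
    by (rule order_trans[OF norm_triangle_ineq]) (simp add: norm_mult flip: of_real_diff)
  also have "\<dots> \<le> \<bar>2*pi*a - 2*pi*b\<bar> + \<bar>2*pi*a - 2*pi*b\<bar>"
    by (intro add_mono cos_lip sin_lip)
  also have "\<dots> = 4 * pi * \<bar>a - b\<bar>"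
    by (simp add: abs_mult flip: right_diff_distrib)
  finally show ?thesis .
qed

lemma exp_le_quad:
  fixes y :: real assumes "\<bar>y\<bar> \<le> 1" shows "exp y \<le> 1 + y + y\<^sup>2"
proof (cases "y \<ge> 0")
  case True then show ?thesis using exp_bound[of y] assms by auto
next
  case False
  have "1 - y \<le> exp (-y)" using exp_ge_add_one_self[of "-y"] by simp
  hence "exp y \<le> 1 / (1 - y)" using False by (simp add: exp_minus field_simps)
  also have "\<dots> \<le> 1 + y + y\<^sup>2"
  proof -
    have "y * (y * y) \<le> 0" using False
      by (metis mult_nonneg_nonpos2 not_le_imp_less order_less_imp_le zero_le_square)
    hence "1 \<le> (1 - y) * (1 + y + y\<^sup>2)" using False
      by (simp add: algebra_simps power2_eq_square power3_eq_cube)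
    then show ?thesis using False by (simp add: divide_simps mult.commute)
  qed
  finally show ?thesis .
qed


lemma (in prob_space) mgf_single:
  fixes X :: "'a \<Rightarrow> real"
  assumes [measurable]: "X \<in> borel_measurable M"
    and bd: "\<And>x. x \<in> space M \<Longrightarrow> \<bar>X x\<bar> \<le> 1"
    and m0: "expectation X = 0" and v: "variance X \<le> v"
    and c: "\<bar>c\<bar> \<le> l" "l \<le> 1"
  shows "(\<integral>\<^sup>+x. ennreal (exp (c * X x)) \<partial>M) \<le> ennreal (exp (l\<^sup>2 * v))"
proof -
  have ae: "AE x in M. \<bar>X x\<bar> \<le> 1" using bd by auto
  have cx: "\<bar>c * X x\<bar> \<le> 1" if x: "x \<in> space M" for x
  proof -
    have "\<bar>c * X x\<bar> \<le> 1 * 1" unfolding abs_mult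
      by (rule mult_mono) (use c bd[OF x] in auto)
    then show ?thesis by simp
  qed
  have iE: "integrable M (\<lambda>x. exp (c * X x))"
    by (rule integrable_const_bound[where B="exp 1"])
       (use cx in \<open>auto intro!: AE_I2 dest!: abs_le_D1\<close>)
  have iX: "integrable M X"
    by (rule integrable_const_bound[where B=1]) (use ae in auto)
  have iX2: "integrable M (\<lambda>x. (X x)\<^sup>2)"
    by (rule integrable_const_bound[where B=1])
       (use bd in \<open>auto intro!: AE_I2 simp: abs_le_square_iff power_le_one abs_square_le_1\<close>)
  have "(\<integral>\<^sup>+x. ennreal (exp (c * X x)) \<partial>M) = ennreal (\<integral>x. exp (c * X x) \<partial>M)"
    by (rule nn_integral_eq_integral[OF iE]) auto
  also have "(\<integral>x. exp (c * X x) \<partial>M) \<le> (\<integral>x. 1 + c * X x + c\<^sup>2 * (X x)\<^sup>2 \<partial>M)"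
  proof (rule integral_mono[OF iE])
    show "integrable M (\<lambda>x. 1 + c * X x + c\<^sup>2 * (X x)\<^sup>2)" using iX iX2 by auto
    fix x assume x: "x \<in> space M"
    have "\<bar>c * X x\<bar> \<le> 1 * 1" unfolding abs_mult
      by (rule mult_mono) (use c bd[OF x] in auto)
    then show "exp (c * X x) \<le> 1 + c * X x + c\<^sup>2 * (X x)\<^sup>2"
      using exp_le_quad[of "c * X x"] by (simp add: power_mult_distrib)
  qed
  also have "(\<integral>x. 1 + c * X x + c\<^sup>2 * (X x)\<^sup>2 \<partial>M) = 1 + c * expectation X + c\<^sup>2 * (\<integral>x. (X x)\<^sup>2 \<partial>M)"
    using iX iX2 by (simp add: prob_space)
  also have "(\<integral>x. (X x)\<^sup>2 \<partial>M) = variance X" using m0 by simp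
  also have "1 + c * expectation X + c\<^sup>2 * variance X \<le> 1 + l\<^sup>2 * v"
  proof -
    have vn: "0 \<le> variance X" by (intro integral_nonneg_AE) auto
    have "c\<^sup>2 \<le> l\<^sup>2" using c by (metis abs_ge_self abs_le_square_iff dual_order.trans abs_of_nonneg abs_ge_zero)
    hence "c\<^sup>2 * variance X \<le> l\<^sup>2 * variance X" using vn by (intro mult_right_mono) auto
    also have "\<dots> \<le> l\<^sup>2 * v" using v by (intro mult_left_mono) auto
    finally show ?thesis using m0 by simp
  qed
  also have "\<dots> \<le> exp (l\<^sup>2 * v)" by (rule exp_ge_add_one_self)
  finally show ?thesis by (simp add: ennreal_leI)
qed

lemma (in prob_space) bernstein:
  fixes X :: "nat \<Rightarrow> 'a \<Rightarrow> real" and I :: "nat set"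
  assumes fin: "finite I" and indep: "indep_vars (\<lambda>_. borel) X I"
    and bd: "\<And>i x. i \<in> I \<Longrightarrow> x \<in> space M \<Longrightarrow> \<bar>X i x\<bar> \<le> 1"
    and m0: "\<And>i. i \<in> I \<Longrightarrow> expectation (X i) = 0"
    and v: "\<And>i. i \<in> I \<Longrightarrow> variance (X i) \<le> v i"
    and a: "\<And>i. i \<in> I \<Longrightarrow> \<bar>a i\<bar> \<le> 1"
    and l: "0 < l" "l \<le> 1"
  shows "prob {x\<in>space M. c \<le> (\<Sum>i\<in>I. a i * X i x)} \<le> exp (l\<^sup>2 * (\<Sum>i\<in>I. v i) - l * c)"
proof -
  have rv[measurable]: "i \<in> I \<Longrightarrow> random_variable borel (X i)" for i
    using indep unfolding indep_vars_def by blast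
  have meas: "(\<lambda>x. (\<Sum>i\<in>I. a i * X i x) * indicator (space M) x) \<in> borel_measurable M"
    by (intro borel_measurable_times borel_measurable_sum borel_measurable_indicator) auto
  have "ennreal (prob {x\<in>space M. c \<le> (\<Sum>i\<in>I. a i * X i x)}) = emeasure M {x\<in>space M. c \<le> (\<Sum>i\<in>I. a i * X i x)}"
    by (simp add: emeasure_eq_measure)
  also have "\<dots> \<le> ennreal (exp (-l*c)) * (\<integral>\<^sup>+x. ennreal (exp (l * (\<Sum>i\<in>I. a i * X i x))) * indicator (space M) x \<partial>M)"
    by (rule Chernoff_ineq_nn_integral_ge[OF l(1) _ meas]) auto
  also have "(\<integral>\<^sup>+x. ennreal (exp (l * (\<Sum>i\<in>I. a i * X i x))) * indicator (space M) x \<partial>M) =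
             (\<integral>\<^sup>+x. (\<Prod>i\<in>I. ennreal (exp (l * a i * X i x))) \<partial>M)"
    by (intro nn_integral_cong)
       (simp_all add: sum_distrib_left exp_sum fin prod_ennreal mult.assoc)
  also have "\<dots> = (\<Prod>i\<in>I. \<integral>\<^sup>+x. ennreal (exp (l * a i * X i x)) \<partial>M)"
    by (intro indep_vars_nn_integral fin indep_vars_compose2[OF indep]) auto
  also have "ennreal (exp (-l * c)) * \<dots> \<le> ennreal (exp (-l * c)) * (\<Prod>i\<in>I. ennreal (exp (l\<^sup>2 * v i)))"
  proof (intro mult_left_mono prod_mono_ennreal)
    fix i assume i: "i \<in> I"
    have "\<bar>l * a i\<bar> \<le> l * 1" using a[OF i] l by (simp add: abs_mult mult_left_mono)
    then show "(\<integral>\<^sup>+x. ennreal (exp (l * a i * X i x)) \<partial>M) \<le> ennreal (exp (l\<^sup>2 * v i))"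
      using mgf_single[OF rv[OF i] bd[OF i] m0[OF i] v[OF i], of "l * a i" l] l by simp
  qed auto
  also have "\<dots> = ennreal (exp (-l*c) * (\<Prod>i\<in>I. exp (l\<^sup>2 * v i)))"
    by (simp add: prod_ennreal prod_nonneg flip: ennreal_mult)
  also have "exp (-l*c) * (\<Prod>i\<in>I. exp (l\<^sup>2 * v i)) = exp (l\<^sup>2 * (\<Sum>i\<in>I. v i) - l * c)"
    by (simp add: exp_diff exp_minus sum_distrib_left exp_sum fin divide_simps mult_ac)
       (simp add: sum_distrib_right exp_sum fin)
  finally show ?thesis
    by (subst (asm) ennreal_le_iff) simp_all
qed


theorem lemma3p3:
  fixes M :: "'a measure" and Z :: "nat \<Rightarrow> nat \<Rightarrow> 'a \<Rightarrow> real" and \<rho> :: "nat \<Rightarrow> real"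
  assumes "prob_space M"
    and rv: "\<And>m n. m \<ge> 1 \<Longrightarrow> n \<ge> 1 \<Longrightarrow> Z m n \<in> borel_measurable M"
    and bdd: "\<And>m n \<omega>. m \<ge> 1 \<Longrightarrow> n \<ge> 1 \<Longrightarrow> \<omega> \<in> space M \<Longrightarrow> \<bar>Z m n \<omega>\<bar> \<le> 1"
    and mean0: "\<And>m n. m \<ge> 1 \<Longrightarrow> n \<ge> 1 \<Longrightarrow> prob_space.expectation M (Z m n) = 0"
    and indep: "\<And>m. m \<ge> 1 \<Longrightarrow> prob_space.indep_vars M (\<lambda>_. borel) (\<lambda>n. Z m n) {1..}"
    and rho_pos: "\<And>n. n \<ge> 1 \<Longrightarrow> \<rho> n > 0"
    and var: "\<And>m n. m \<ge> 1 \<Longrightarrow> n \<ge> 1 \<Longrightarrow> prob_space.variance M (Z m n) \<le> \<rho> n"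
    and growth: "filterlim (\<lambda>N. (\<Sum>n=1..N. \<rho> n) / ln (real N)) at_top at_top"
  shows "AE \<omega> in M. \<exists>C. \<forall>N\<ge>2. \<forall>m\<in>{1..N}. \<forall>t\<in>{0..1::real}.
           norm (\<Sum>n=1..N. complex_of_real (Z m n \<omega>) * e (real n * t))
             \<le> C * sqrt (ln (real N) * (\<Sum>n=1..N. \<rho> n))"
proof -
  interpret P: prob_space M by fact
  define R where "R N = (\<Sum>n=1..N. \<rho> n)" for N
  define L where "L N = ln (real N)" for N :: nat
  define x where "x N = 6 * sqrt (L N * R N)" for N
  have Rpos: "R N > 0" if "N \<ge> 1" for N
    unfolding R_def using that rho_pos by (intro sum_pos) auto
  have Lpos: "L N > 0" if "N \<ge> 2" for N
    unfolding L_def using that by simp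
  obtain N1 where N1: "N1 \<ge> 3" "\<And>N. N \<ge> N1 \<Longrightarrow> 9 * L N \<le> R N"
  proof -
    from growth have "eventually (\<lambda>N. 9 \<le> (\<Sum>n=1..N. \<rho> n) / ln (real N)) sequentially"
      unfolding filterlim_at_top by blast
    then obtain N0 where N0: "\<And>N. N \<ge> N0 \<Longrightarrow> 9 \<le> R N / L N"
      unfolding eventually_sequentially R_def L_def by blast
    show ?thesis
    proof (rule that[of "max N0 3"])
      fix N assume N: "N \<ge> max N0 3"
      then have "9 \<le> R N / L N" "L N > 0" using N0 Lpos by auto
      then show "9 * L N \<le> R N" by (simp add: field_simps)
    qed auto
  qed
  have L1: "L N \<ge> 1" if "N \<ge> 3" for N
  proof -
    have "exp 1 \<le> real N" using exp_le that by linarith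
    then show ?thesis unfolding L_def using ln_ge_iff by (metis exp_gt_zero order_less_le_trans)
  qed
  have meas[measurable]: "(\<lambda>\<omega>. \<Sum>n\<in>{1..N}. a n * Z m n \<omega>) \<in> borel_measurable M" if "m \<ge> 1" for m N a
    using that by (intro borel_measurable_sum borel_measurable_times borel_measurable_const rv) auto
  define E where "E N m a = {\<omega>\<in>space M. x N \<le> (\<Sum>n\<in>{1..N}. a n * Z m n \<omega>)}" for N m a
  have Esets: "E N m a \<in> sets M" if "m \<ge> 1" for N m a
    unfolding E_def using meas[OF that] by measurable
  have Eprob: "measure M (E N m a) \<le> 1 / real N ^ 9"
    if N: "N \<ge> N1" and m: "m \<ge> 1" and a: "\<And>n. \<bar>a n\<bar> \<le> 1" for N m a
  proof -
    have N3: "N \<ge> 3" using N N1 by auto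
    have RL: "9 * L N \<le> R N" using N1 N by auto
    have Lp: "L N > 0" using Lpos N3 by auto
    have Rp: "R N > 0" using Rpos N3 by auto
    define l where "l = sqrt (9 * L N / R N)"
    have l0: "0 < l" unfolding l_def using Lp Rp by auto
    have l1: "l \<le> 1" unfolding l_def using RL Rp by (simp add: divide_simps)
    have ind: "P.indep_vars (\<lambda>_. borel) (Z m) {1..N}"
      by (rule P.indep_vars_subset[OF indep[OF m]]) auto
    have "measure M (E N m a) \<le> exp (l\<^sup>2 * (\<Sum>n\<in>{1..N}. \<rho> n) - l * x N)"
      unfolding E_def
      by (rule P.bernstein[OF _ ind]) (use bdd mean0 var a m l0 l1 in auto)
    also have "l\<^sup>2 * (\<Sum>n\<in>{1..N}. \<rho> n) - l * x N = - 9 * L N"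
    proof -
      have "l\<^sup>2 = 9 * L N / R N" unfolding l_def using Lp Rp by simp
      moreover have "l * x N = 18 * L N"
      proof -
        have "l * x N = 6 * sqrt (9 * L N / R N * (L N * R N))"
          unfolding l_def x_def by (simp only: real_sqrt_mult mult_ac)
        also have "9 * L N / R N * (L N * R N) = (3 * L N)\<^sup>2" using Rp by (simp add: field_simps power2_eq_square)
        finally have "l * x N = 6 * sqrt ((3 * L N)\<^sup>2)" .
        then show ?thesis using Lp by (simp only: real_sqrt_abs)
      qed
      ultimately show ?thesis using Rp unfolding R_def by simp
    qed
    also have "exp (- 9 * L N) = 1 / real N ^ 9"
    proof -
      have "exp (real 9 * L N) = real N ^ 9" unfolding L_def exp_of_nat_mult using N3 by simp
      then show ?thesis by (simp add: exp_minus field_simps)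
    qed
    finally show ?thesis .
  qed
  define C where "C j N = (\<lambda>n::nat. cos (2 * pi * (real n * (real j / real N ^ 3))))" for j N :: nat
  define S where "S j N = (\<lambda>n::nat. sin (2 * pi * (real n * (real j / real N ^ 3))))" for j N :: nat
  define A where "A N = (if N1 \<le> N then (\<Union>m\<in>{1..N}. \<Union>j\<in>{..N^3}. \<Union>a\<in>{C j N, (\<lambda>n. - C j N n), S j N, (\<lambda>n. - S j N n)}. E N m a) else {})" for N
  have Asets: "A N \<in> sets M" for N
    unfolding A_def using Esets by auto
  have Aprob: "measure M (A N) \<le> 8 * inverse (real N ^ 2)" for N
  proof (cases "N1 \<le> N")
    case False then show ?thesis unfolding A_def by simp
  next
    case True
    have N3: "N \<ge> 3" using True N1 by auto
    define F where "F j = {C j N, (\<lambda>n. - C j N n), S j N, (\<lambda>n. - S j N n)}" for j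
    have cF: "card (F j) \<le> 4" for j unfolding F_def by (auto simp: card_insert_if)
    have Fb: "a \<in> F j \<Longrightarrow> \<bar>a n\<bar> \<le> 1" for a j n
      unfolding F_def C_def S_def by auto
    have lv3: "measure M (\<Union>a\<in>F j. E N m a) \<le> 4 * (1 / real N ^ 9)" if m: "m \<ge> 1" for m j
    proof -
      have "measure M (\<Union>a\<in>F j. E N m a) \<le> (\<Sum>a\<in>F j. measure M (E N m a))"
        by (rule measure_UNION_le) (auto simp: F_def intro: Esets[OF m])
      also have "\<dots> \<le> real (card (F j)) * (1 / real N ^ 9)"
        by (rule sum_bounded_above) (use Eprob[OF True m] Fb in auto)
      also have "\<dots> \<le> 4 * (1 / real N ^ 9)"
        using cF[of j] by (intro mult_right_mono) auto
      finally show ?thesis .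
    qed
    have lv2: "measure M (\<Union>j\<in>{..N^3}. \<Union>a\<in>F j. E N m a) \<le> (real N ^ 3 + 1) * (4 * (1 / real N ^ 9))"
      if m: "m \<ge> 1" for m
    proof -
      have "measure M (\<Union>j\<in>{..N^3}. \<Union>a\<in>F j. E N m a) \<le> (\<Sum>j\<in>{..N^3}. measure M (\<Union>a\<in>F j. E N m a))"
        by (rule measure_UNION_le) (auto simp: F_def intro: Esets[OF m])
      also have "\<dots> \<le> real (card {..N^3}) * (4 * (1 / real N ^ 9))"
        by (rule sum_bounded_above) (use lv3[OF m] in auto)
      also have "real (card {..N^3}) = real N ^ 3 + 1" by simp
      finally show ?thesis .
    qed
    have "measure M (A N) = measure M (\<Union>m\<in>{1..N}. \<Union>j\<in>{..N^3}. \<Union>a\<in>F j. E N m a)"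
      unfolding A_def F_def using True by simp
    also have "\<dots> \<le> (\<Sum>m\<in>{1..N}. measure M (\<Union>j\<in>{..N^3}. \<Union>a\<in>F j. E N m a))"
      by (rule measure_UNION_le) (use Esets in \<open>auto simp: F_def\<close>)
    also have "\<dots> \<le> real (card {1..N}) * ((real N ^ 3 + 1) * (4 * (1 / real N ^ 9)))"
      by (rule sum_bounded_above) (use lv2 in auto)
    also have "\<dots> \<le> 8 * inverse (real N ^ 2)"
    proof -
      define r where "r = real N"
      have r1: "r \<ge> 1" unfolding r_def using N3 by simp
      have a: "r ^ 3 + 1 \<le> 2 * r ^ 3" using r1 by (simp add: one_le_power)
      have "r * ((r ^ 3 + 1) * (4 * (1 / r ^ 9))) \<le> r * ((2 * r ^ 3) * (4 * (1 / r ^ 9)))"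
        using a r1 by (intro mult_left_mono mult_right_mono) auto
      also have "\<dots> = 8 / r ^ 5" using r1 by (simp add: field_simps power_add[symmetric] eval_nat_numeral)
      also have "\<dots> \<le> 8 / r ^ 2" using r1 by (intro divide_left_mono power_increasing) auto
      finally show ?thesis unfolding r_def by (simp add: divide_inverse)
    qed
    finally show ?thesis .
  qed
  have "AE \<omega> in M. eventually (\<lambda>N. \<omega> \<in> space M - A N) sequentially"
  proof (rule borel_cantelli_AE1[OF Asets])
    show "emeasure M (A N) < \<infinity>" for N by (simp add: P.emeasure_eq_measure)
    show "summable (\<lambda>N. measure M (A N))"
      by (rule summable_comparison_test[OF _ summable_mult[OF inverse_power_summable[of 2], of 8]])
         (use Aprob in auto)
  qed
  then show ?thesis
  proof (rule AE_mp[OF _ AE_I2], intro impI)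
    fix \<omega> assume \<omega>: "\<omega> \<in> space M" and ev: "eventually (\<lambda>N. \<omega> \<in> space M - A N) sequentially"
    show "\<exists>C. \<forall>N\<ge>2. \<forall>m\<in>{1..N}. \<forall>t\<in>{0..1::real}.
           norm (\<Sum>n=1..N. complex_of_real (Z m n \<omega>) * e (real n * t))
             \<le> C * sqrt (ln (real N) * (\<Sum>n=1..N. \<rho> n))"
    proof -
      obtain N2 where N2: "\<And>N. N \<ge> N2 \<Longrightarrow> \<omega> \<in> space M - A N"
        using ev unfolding eventually_sequentially by blast
      define N3 where "N3 = max N2 N1"
      define K where "K = 28 + (\<Sum>N\<in>{2..<N3}. real N / sqrt (L N * R N))"
      have tn: "0 \<le> real N / sqrt (L N * R N)" if "N \<ge> 2" for N
      proof -
        have "L N > 0" "R N > 0" using Lpos Rpos that by auto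
        then show ?thesis by simp
      qed
      have K28: "K \<ge> 28" unfolding K_def
      proof -
        have "0 \<le> (\<Sum>N\<in>{2..<N3}. real N / sqrt (L N * R N))"
        proof (intro sum_nonneg divide_nonneg_nonneg)
          fix N assume "N \<in> {2..<N3}"
          then have "L N > 0" "R N > 0" using Lpos Rpos by auto
          then show "0 \<le> sqrt (L N * R N)" by simp
        qed auto
        then show "28 \<le> 28 + (\<Sum>N\<in>{2..<N3}. real N / sqrt (L N * R N))" by simp
      qed
      have main: "norm (\<Sum>n=1..N. complex_of_real (Z m n \<omega>) * e (real n * t)) \<le> K * sqrt (L N * R N)"
        if N: "N \<ge> 2" and m: "m \<in> {1..N}" and t: "t \<in> {0..1::real}" for N m t
      proof -
        define P where "P t = (\<Sum>n=1..N. complex_of_real (Z m n \<omega>) * e (real n * t))" for t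
        have m1: "m \<ge> 1" using m by auto
        have sq: "sqrt (L N * R N) > 0" using Lpos[OF N] Rpos[of N] N by simp
        show ?thesis
        proof (cases "N < N3")
          case True
          have "norm (P t) \<le> (\<Sum>n=1..N. norm (complex_of_real (Z m n \<omega>) * e (real n * t)))"
            unfolding P_def by (rule norm_sum)
          also have "\<dots> \<le> (\<Sum>n=1..N. 1)"
            by (rule sum_mono) (use bdd[OF m1 _ \<omega>] in \<open>auto simp: norm_mult norm_e\<close>)
          also have "\<dots> = real N" by simp
          finally have bnd: "norm (P t) \<le> real N" .
          have "real N / sqrt (L N * R N) \<le> (\<Sum>N\<in>{2..<N3}. real N / sqrt (L N * R N))"
            by (rule member_le_sum) (use True N tn in auto)
          also have "\<dots> \<le> K" unfolding K_def by simp
          finally have "real N \<le> K * sqrt (L N * R N)" using sq by (simp add: divide_simps)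
          then show ?thesis using bnd unfolding P_def by simp
        next
          case False
          then have NN1: "N \<ge> N1" and NN2: "N \<ge> N2" unfolding N3_def by auto
          have N3': "N \<ge> 3" using NN1 N1 by auto
          have notA: "\<omega> \<notin> A N" using N2[OF NN2] by auto
          define j where "j = nat \<lfloor>t * real N ^ 3\<rfloor>"
          define s where "s = real j / real N ^ 3"
          have Np: "real N ^ 3 > 0" using N by simp
          have fl0: "0 \<le> \<lfloor>t * real N ^ 3\<rfloor>" using t by auto
          have jr: "real j = of_int \<lfloor>t * real N ^ 3\<rfloor>" unfolding j_def using fl0 by simp
          have "of_int \<lfloor>t * real N ^ 3\<rfloor> \<le> t * real N ^ 3" by (rule of_int_floor_le)
          then have st: "s \<le> t" unfolding s_def jr using Np by (simp add: divide_simps)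
          have "t * real N ^ 3 < of_int \<lfloor>t * real N ^ 3\<rfloor> + 1" by (rule real_of_int_floor_add_one_gt)
          then have fl1: "t * real N ^ 3 - of_int \<lfloor>t * real N ^ 3\<rfloor> \<le> 1" by linarith
          have ts: "t - s \<le> 1 / real N ^ 3" unfolding s_def jr using Np fl1 by (simp add: divide_simps)
          have "t * real N ^ 3 \<le> real N ^ 3" using t Np by auto
          then have "\<lfloor>t * real N ^ 3\<rfloor> \<le> \<lfloor>real N ^ 3\<rfloor>" by (rule floor_mono)
          moreover have "\<lfloor>real N ^ 3\<rfloor> = int N ^ 3" by (metis floor_of_nat of_nat_power)
          ultimately have jN: "j \<in> {..N^3}" unfolding j_def using fl0 by (simp add: nat_le_iff)
          define Sc where "Sc = (\<Sum>n\<in>{1..N}. C j N n * Z m n \<omega>)"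
          define Ss where "Ss = (\<Sum>n\<in>{1..N}. S j N n * Z m n \<omega>)"
          have nE: "\<not> x N \<le> (\<Sum>n\<in>{1..N}. a n * Z m n \<omega>)"
            if "a \<in> {C j N, (\<lambda>n. - C j N n), S j N, (\<lambda>n. - S j N n)}" for a
          proof -
            have "\<omega> \<notin> (\<Union>m\<in>{1..N}. \<Union>j\<in>{..N^3}. \<Union>a\<in>{C j N, (\<lambda>n. - C j N n), S j N, (\<lambda>n. - S j N n)}. E N m a)"
              using notA NN1 unfolding A_def by simp
            then have "\<omega> \<notin> E N m a" using that m jN by blast
            then show ?thesis using \<omega> unfolding E_def by blast
          qed
          have "\<bar>Sc\<bar> \<le> x N" using nE[of "C j N"] nE[of "\<lambda>n. - C j N n"]
            unfolding Sc_def by (auto simp: sum_negf)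
          moreover have "\<bar>Ss\<bar> \<le> x N" using nE[of "S j N"] nE[of "\<lambda>n. - S j N n"]
            unfolding Ss_def by (auto simp: sum_negf)
          moreover have "P s = complex_of_real Sc + \<i> * complex_of_real Ss"
            unfolding P_def Sc_def Ss_def C_def S_def s_def
            by (simp add: e_eq sum_distrib_left distrib_left sum.distrib mult_ac)
          ultimately have Ps: "norm (P s) \<le> 2 * x N"
            using norm_triangle_ineq[of "complex_of_real Sc" "\<i> * complex_of_real Ss"]
            by (simp add: norm_mult)
          have "norm (P t - P s) = norm (\<Sum>n=1..N. complex_of_real (Z m n \<omega>) * (e (real n * t) - e (real n * s)))"
            unfolding P_def by (simp add: sum_subtractf algebra_simps)
          also have "\<dots> \<le> (\<Sum>n=1..N. norm (complex_of_real (Z m n \<omega>) * (e (real n * t) - e (real n * s))))"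
            by (rule norm_sum)
          also have "\<dots> \<le> (\<Sum>n=1..N. 4 * pi * (1 / real N ^ 2))"
          proof (rule sum_mono)
            fix n assume n: "n \<in> {1..N}"
            have "norm (complex_of_real (Z m n \<omega>) * (e (real n * t) - e (real n * s)))
                  = \<bar>Z m n \<omega>\<bar> * norm (e (real n * t) - e (real n * s))" by (simp add: norm_mult)
            also have "\<dots> \<le> 1 * (4 * pi * \<bar>real n * t - real n * s\<bar>)"
              using bdd[OF m1 _ \<omega>, of n] n by (intro mult_mono e_lip) auto
            also have "\<bar>real n * t - real n * s\<bar> = real n * (t - s)"
              using st by (simp add: abs_mult flip: right_diff_distrib)
            also have "real n * (t - s) \<le> real N * (1 / real N ^ 3)"
              using n ts st by (intro mult_mono) auto
            also have "real N * (1 / real N ^ 3) = 1 / real N ^ 2"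
              using N by (simp add: field_simps eval_nat_numeral)
            finally show "norm (complex_of_real (Z m n \<omega>) * (e (real n * t) - e (real n * s))) \<le> 4 * pi * (1 / real N ^ 2)"
              by (simp add: mult_left_mono)
          qed
          also have "\<dots> = 4 * pi / real N"
            using N by (simp add: field_simps eval_nat_numeral)
          also have "\<dots> \<le> 16"
          proof -
            have "4 * pi / real N \<le> 4 * pi" using N by (simp add: divide_simps)
            then show ?thesis using pi_less_4 by simp
          qed
          finally have Pd: "norm (P t - P s) \<le> 16" .
          have LR1: "1 \<le> sqrt (L N * R N)"
          proof -
            have "1 \<le> L N" using L1[OF N3'] .
            moreover have "1 \<le> R N" using N1(2)[OF NN1] L1[OF N3'] by simp
            ultimately have "1 * 1 \<le> L N * R N" by (intro mult_mono) auto
            then show ?thesis by simp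
          qed
          have "norm (P t) \<le> norm (P s) + norm (P t - P s)"
            using norm_triangle_ineq[of "P s" "P t - P s"] by simp
          also have "\<dots> \<le> 12 * sqrt (L N * R N) + 16 * sqrt (L N * R N)"
            using Ps Pd LR1 unfolding x_def by linarith
          also have "\<dots> \<le> K * sqrt (L N * R N)"
            using mult_right_mono[OF K28, of "sqrt (L N * R N)"] sq by simp
          finally show ?thesis unfolding P_def .
        qed
      qed
      show ?thesis
        by (rule exI[of _ K]) (use main in \<open>simp add: L_def R_def\<close>)
    qed
  qed
qed

end
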